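(* Let $k$ be a field, $Q$ a finite quiver with vertex set $Q_0$ and arrow set $Q_1$, $kQ$ its path algebra, and $X$ a $kQ$-bimodule which is finite dimensional over $k$. Then $$\dim_k H^1(kQ,X)=\dim_k(X^{kQ})-\dim_k(X^{kQ_0})+\sum_{x,y\in Q_0}|yQ_1x|\,\dim_k(yXx),$$ where $yQ_1x$ is the set of arrows from $x$ to $y$.
   Context: $H^1(kQ,X)$ is the first Hochschild cohomology of $kQ$ with coefficients in $X$ (derivations $kQ\to X$ modulo inner derivations). The path algebra $kQ$ has basis the paths of $Q$ (including the vertices as length-zero paths), multiplication given by concatenation when possible and $0$ otherwise; vertices are orthogonal idempotents summing to $1$. $kQ_0\subseteq kQ$ is the subalgebra spanned by the vertices. For a subalgebra $A$, $X^A=\{x\in X\mid ax=xa\ \forall a\in A\}$. For vertices $x,y$, $yXx$ denotes the subspace $y\cdot X\cdot x$. *)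

theory Defs
  imports Complex_Main "HOL-Library.Function_Algebras"
begin

text \<open>A path is a pair (v, as): start vertex v and the list of arrows as in order of traversal.\<close>

definition quiver :: "'v set \<Rightarrow> 'a set \<Rightarrow> ('a \<Rightarrow> 'v) \<Rightarrow> ('a \<Rightarrow> 'v) \<Rightarrow> bool" where
  "quiver V Ar src tgt \<longleftrightarrow> finite V \<and> finite Ar \<and> src ` Ar \<subseteq> V \<and> tgt ` Ar \<subseteq> V"

fun chain_from :: "('a \<Rightarrow> 'v) \<Rightarrow> ('a \<Rightarrow> 'v) \<Rightarrow> 'v \<Rightarrow> 'a list \<Rightarrow> bool" where
  "chain_from src tgt v [] = True"
| "chain_from src tgt v (a # as) = (src a = v \<and> chain_from src tgt (tgt a) as)"

definition valid_path :: "'v set \<Rightarrow> 'a set \<Rightarrow> ('a \<Rightarrow> 'v) \<Rightarrow> ('a \<Rightarrow> 'v) \<Rightarrow> 'v \<times> 'a list \<Rightarrow> bool" where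
  "valid_path V Ar src tgt p \<longleftrightarrow> fst p \<in> V \<and> set (snd p) \<subseteq> Ar \<and> chain_from src tgt (fst p) (snd p)"

definition path_end :: "('a \<Rightarrow> 'v) \<Rightarrow> 'v \<times> 'a list \<Rightarrow> 'v" where
  "path_end tgt p = (if snd p = [] then fst p else tgt (last (snd p)))"

text \<open>Product of paths p * q ("p after q"): defined (nonzero) iff q ends where p starts.\<close>
definition composable :: "('a \<Rightarrow> 'v) \<Rightarrow> 'v \<times> 'a list \<Rightarrow> 'v \<times> 'a list \<Rightarrow> bool" where
  "composable tgt p q \<longleftrightarrow> path_end tgt q = fst p"

definition path_comp :: "'v \<times> 'a list \<Rightarrow> 'v \<times> 'a list \<Rightarrow> 'v \<times> 'a list" where
  "path_comp p q = (fst q, snd q @ snd p)"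

text \<open>Elements of kQ: finitely supported k-valued functions on the valid paths
(coefficients with respect to the path basis).\<close>

definition pathalg :: "'v set \<Rightarrow> 'a set \<Rightarrow> ('a \<Rightarrow> 'v) \<Rightarrow> ('a \<Rightarrow> 'v) \<Rightarrow> ('v \<times> 'a list \<Rightarrow> 'k::field) set" where
  "pathalg V Ar src tgt = {f. finite {p. f p \<noteq> 0} \<and> (\<forall>p. f p \<noteq> 0 \<longrightarrow> valid_path V Ar src tgt p)}"

definition pa_add :: "('v \<times> 'a list \<Rightarrow> 'k::field) \<Rightarrow> ('v \<times> 'a list \<Rightarrow> 'k) \<Rightarrow> ('v \<times> 'a list \<Rightarrow> 'k)" where
  "pa_add f g = (\<lambda>p. f p + g p)"

definition pa_scale :: "'k::field \<Rightarrow> ('v \<times> 'a list \<Rightarrow> 'k) \<Rightarrow> ('v \<times> 'a list \<Rightarrow> 'k)" where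
  "pa_scale c f = (\<lambda>p. c * f p)"

definition pa_mult :: "('a \<Rightarrow> 'v) \<Rightarrow> ('v \<times> 'a list \<Rightarrow> 'k::field) \<Rightarrow> ('v \<times> 'a list \<Rightarrow> 'k) \<Rightarrow> ('v \<times> 'a list \<Rightarrow> 'k)" where
  "pa_mult tgt f g = (\<lambda>r. \<Sum>(p, q) \<in> {(p, q). f p \<noteq> 0 \<and> g q \<noteq> 0 \<and> composable tgt p q \<and> path_comp p q = r}.
                        f p * g q)"

definition vtx :: "'v \<Rightarrow> ('v \<times> 'a list \<Rightarrow> 'k::field)" where
  "vtx v = (\<lambda>p. if p = (v, []) then 1 else 0)"

definition pa_one :: "'v set \<Rightarrow> ('v \<times> 'a list \<Rightarrow> 'k::field)" where
  "pa_one V = (\<lambda>p. if fst p \<in> V \<and> snd p = [] then 1 else 0)"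

definition vertex_subalg :: "'v set \<Rightarrow> 'a set \<Rightarrow> ('a \<Rightarrow> 'v) \<Rightarrow> ('a \<Rightarrow> 'v) \<Rightarrow> ('v \<times> 'a list \<Rightarrow> 'k::field) set" where
  "vertex_subalg V Ar src tgt = {f \<in> pathalg V Ar src tgt. \<forall>p. f p \<noteq> 0 \<longrightarrow> snd p = []}"

text \<open>X is the type 'x, a k-vector space via sc, with left action lact and right action ract
of kQ (the actions are only constrained on elements of kQ).\<close>

definition pa_bimodule ::
  "'v set \<Rightarrow> 'a set \<Rightarrow> ('a \<Rightarrow> 'v) \<Rightarrow> ('a \<Rightarrow> 'v) \<Rightarrow> ('k::field \<Rightarrow> 'x::ab_group_add \<Rightarrow> 'x)
   \<Rightarrow> (('v \<times> 'a list \<Rightarrow> 'k) \<Rightarrow> 'x \<Rightarrow> 'x) \<Rightarrow> ('x \<Rightarrow> ('v \<times> 'a list \<Rightarrow> 'k) \<Rightarrow> 'x) \<Rightarrow> bool" where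
  "pa_bimodule V Ar src tgt sc lact ract \<longleftrightarrow>
     (let A = pathalg V Ar src tgt in
      vector_space sc
      \<and> (\<forall>f\<in>A. \<forall>m n. lact f (m + n) = lact f m + lact f n \<and> ract (m + n) f = ract m f + ract n f)
      \<and> (\<forall>f\<in>A. \<forall>g\<in>A. \<forall>m. lact (pa_add f g) m = lact f m + lact g m \<and> ract m (pa_add f g) = ract m f + ract m g)
      \<and> (\<forall>f\<in>A. \<forall>c m. lact (pa_scale c f) m = sc c (lact f m) \<and> lact f (sc c m) = sc c (lact f m)
                    \<and> ract m (pa_scale c f) = sc c (ract m f) \<and> ract (sc c m) f = sc c (ract m f))
      \<and> (\<forall>f\<in>A. \<forall>g\<in>A. \<forall>m. lact (pa_mult tgt f g) m = lact f (lact g m)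
                        \<and> ract m (pa_mult tgt f g) = ract (ract m f) g
                        \<and> ract (lact f m) g = lact f (ract m g))
      \<and> (\<forall>m. lact (pa_one V) m = m \<and> ract m (pa_one V) = m))"

definition fin_dim :: "('k::field \<Rightarrow> 'x::ab_group_add \<Rightarrow> 'x) \<Rightarrow> bool" where
  "fin_dim sc \<longleftrightarrow> (\<exists>B. finite B \<and> module.span sc B = UNIV)"

definition invariants :: "('f \<Rightarrow> 'x \<Rightarrow> 'x) \<Rightarrow> ('x \<Rightarrow> 'f \<Rightarrow> 'x) \<Rightarrow> 'f set \<Rightarrow> 'x set" where
  "invariants lact ract B = {m. \<forall>a\<in>B. lact a m = ract m a}"

definition corner :: "('v \<Rightarrow> 'f) \<Rightarrow> ('f \<Rightarrow> 'x \<Rightarrow> 'x) \<Rightarrow> ('x \<Rightarrow> 'f \<Rightarrow> 'x) \<Rightarrow> 'v \<Rightarrow> 'v \<Rightarrow> 'x set" where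
  "corner e lact ract y x = {lact (e y) (ract m (e x)) | m. True}"

text \<open>Derivations kQ \<rightarrow> X (k-linear maps with the Leibniz rule), taken extensionally
(value 0 outside kQ), and inner derivations a \<mapsto> a m - m a.\<close>

definition derivations :: "'v set \<Rightarrow> 'a set \<Rightarrow> ('a \<Rightarrow> 'v) \<Rightarrow> ('a \<Rightarrow> 'v) \<Rightarrow> ('k::field \<Rightarrow> 'x::ab_group_add \<Rightarrow> 'x)
   \<Rightarrow> (('v \<times> 'a list \<Rightarrow> 'k) \<Rightarrow> 'x \<Rightarrow> 'x) \<Rightarrow> ('x \<Rightarrow> ('v \<times> 'a list \<Rightarrow> 'k) \<Rightarrow> 'x)
   \<Rightarrow> (('v \<times> 'a list \<Rightarrow> 'k) \<Rightarrow> 'x) set" where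
  "derivations V Ar src tgt sc lact ract =
     (let A = pathalg V Ar src tgt in
      {D. (\<forall>f. f \<notin> A \<longrightarrow> D f = 0)
        \<and> (\<forall>f\<in>A. \<forall>g\<in>A. D (pa_add f g) = D f + D g)
        \<and> (\<forall>f\<in>A. \<forall>c. D (pa_scale c f) = sc c (D f))
        \<and> (\<forall>f\<in>A. \<forall>g\<in>A. D (pa_mult tgt f g) = ract (D f) g + lact f (D g))})"

definition inner_derivations :: "'v set \<Rightarrow> 'a set \<Rightarrow> ('a \<Rightarrow> 'v) \<Rightarrow> ('a \<Rightarrow> 'v)
   \<Rightarrow> (('v \<times> 'a list \<Rightarrow> 'k::field) \<Rightarrow> 'x::ab_group_add \<Rightarrow> 'x) \<Rightarrow> ('x \<Rightarrow> ('v \<times> 'a list \<Rightarrow> 'k) \<Rightarrow> 'x)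
   \<Rightarrow> (('v \<times> 'a list \<Rightarrow> 'k) \<Rightarrow> 'x) set" where
  "inner_derivations V Ar src tgt lact ract =
     {(\<lambda>f. if f \<in> pathalg V Ar src tgt then lact f m - ract m f else 0) | m. True}"

definition fun_scale :: "('k \<Rightarrow> 'x \<Rightarrow> 'x) \<Rightarrow> 'k \<Rightarrow> ('b \<Rightarrow> 'x) \<Rightarrow> ('b \<Rightarrow> 'x)" where
  "fun_scale sc c D = (\<lambda>f. sc c (D f))"

text \<open>dim_k H^1(kQ,X) = dim_k (Der / Inn) = dim Der - dim Inn (Inn is a subspace of Der,
both finite dimensional when X is).\<close>
definition H1_dim :: "'v set \<Rightarrow> 'a set \<Rightarrow> ('a \<Rightarrow> 'v) \<Rightarrow> ('a \<Rightarrow> 'v) \<Rightarrow> ('k::field \<Rightarrow> 'x::ab_group_add \<Rightarrow> 'x)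
   \<Rightarrow> (('v \<times> 'a list \<Rightarrow> 'k) \<Rightarrow> 'x \<Rightarrow> 'x) \<Rightarrow> ('x \<Rightarrow> ('v \<times> 'a list \<Rightarrow> 'k) \<Rightarrow> 'x) \<Rightarrow> int" where
  "H1_dim V Ar src tgt sc lact ract =
     int (vector_space.dim (fun_scale sc) (derivations V Ar src tgt sc lact ract))
     - int (vector_space.dim (fun_scale sc) (inner_derivations V Ar src tgt lact ract))"

end

theory Submission
  imports Defs
begin


context vector_space begin

lemma basis_finite_exists:
  assumes "finite F" "S \<subseteq> span F"
  obtains B where "finite B" "B \<subseteq> S" "independent B" "S \<subseteq> span B" "card B = dim S"
proof -
  obtain B where B: "B \<subseteq> S" "independent B" "S \<subseteq> span B" "card B = dim S"
    using basis_exists by blast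
  have "B \<subseteq> span F" using B(1) assms(2) by blast
  then have "finite B" using independent_span_bound[OF assms(1) B(2)] by blast
  then show ?thesis using B that by blast
qed

lemma dim_zero_set: "dim {0} = 0"
proof -
  have "span {0} = span {}" by simp
  then have "dim {0} = dim {}" by (rule span_eq_dim)
  also have "\<dots> = 0" using dim_eq_card_independent[OF independent_empty] by simp
  finally show ?thesis .
qed

end

context vector_space_pair begin

lemma rank_nullity:
  assumes lin: "Vector_Spaces.linear s1 s2 f" and S: "vs1.subspace S"
    and F1: "finite F1" "S \<inter> {x. f x = 0} \<subseteq> vs1.span F1"
    and F2: "finite F2" "f ` S \<subseteq> vs2.span F2"
  shows "vs1.dim S = vs2.dim (f ` S) + vs1.dim (S \<inter> {x. f x = 0})
         \<and> (\<exists>F. finite F \<and> S \<subseteq> vs1.span F)"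
proof -
  obtain K where K: "finite K" "K \<subseteq> S \<inter> {x. f x = 0}" "vs1.independent K"
      "S \<inter> {x. f x = 0} \<subseteq> vs1.span K" "card K = vs1.dim (S \<inter> {x. f x = 0})"
    using vs1.basis_finite_exists[OF F1] by blast
  obtain C where C: "finite C" "C \<subseteq> f ` S" "vs2.independent C"
      "f ` S \<subseteq> vs2.span C" "card C = vs2.dim (f ` S)"
    using vs2.basis_finite_exists[OF F2] by blast
  define g where "g c = (SOME x. x \<in> S \<and> f x = c)" for c
  have g: "g c \<in> S \<and> f (g c) = c" if "c \<in> C" for c
  proof -
    have "\<exists>x. x \<in> S \<and> f x = c" using C(2) that by blast
    then show ?thesis unfolding g_def by (rule someI_ex)
  qed
  have C0: "0 \<notin> C" using C(3) vs2.dependent_zero by blast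
  have injg: "inj_on g C" by (metis g inj_onI)
  have disj: "K \<inter> g ` C = {}"
  proof (rule ccontr)
    assume "K \<inter> g ` C \<noteq> {}"
    then obtain c where "c \<in> C" "g c \<in> K" by blast
    then have "f (g c) = 0" "f (g c) = c" using K(2) g by auto
    then show False using C0 \<open>c \<in> C\<close> by auto
  qed
  let ?B = "K \<union> g ` C"
  have Bfin: "finite ?B" using K(1) C(1) by simp
  have BS: "?B \<subseteq> S" using K(2) g by auto
  have spanB: "S \<subseteq> vs1.span ?B"
  proof
    fix x assume x: "x \<in> S"
    then have "f x \<in> vs2.span C" using C(4) by blast
    then obtain u where u: "f x = (\<Sum>c\<in>C. s2 (u c) c)"
      using vs2.span_finite[OF C(1)] by blast
    define y where "y = x - (\<Sum>c\<in>C. s1 (u c) (g c))"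
    have sumS: "(\<Sum>c\<in>C. s1 (u c) (g c)) \<in> S"
      using g by (intro vs1.subspace_sum[OF S] vs1.subspace_scale[OF S]) auto
    have yS: "y \<in> S" unfolding y_def using x sumS vs1.subspace_diff[OF S] by blast
    have "f y = f x - (\<Sum>c\<in>C. s2 (u c) (f (g c)))"
      unfolding y_def by (simp add: linear_diff[OF lin] linear_sum[OF lin] linear_scale[OF lin])
    also have "\<dots> = 0" using u g by simp
    finally have "y \<in> vs1.span K" using K(4) yS by blast
    then have "y \<in> vs1.span ?B" using vs1.span_mono[of K ?B] by blast
    moreover have "(\<Sum>c\<in>C. s1 (u c) (g c)) \<in> vs1.span ?B"
      by (intro vs1.span_sum vs1.span_scale vs1.span_base) auto
    ultimately have "y + (\<Sum>c\<in>C. s1 (u c) (g c)) \<in> vs1.span ?B" by (rule vs1.span_add)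
    then show "x \<in> vs1.span ?B" unfolding y_def by simp
  qed
  have indB: "vs1.independent ?B"
  proof (rule vs1.independent_if_scalars_zero[OF Bfin])
    fix u x assume sum0: "(\<Sum>x\<in>?B. s1 (u x) x) = 0" and xB: "x \<in> ?B"
    have split: "(\<Sum>x\<in>?B. s1 (u x) x) = (\<Sum>x\<in>K. s1 (u x) x) + (\<Sum>x\<in>g`C. s1 (u x) x)"
      using K(1) C(1) disj by (simp add: sum.union_disjoint)
    have fK: "f (\<Sum>x\<in>K. s1 (u x) x) = 0"
      using K(2) by (auto simp: linear_sum[OF lin] linear_scale[OF lin] intro!: sum.neutral)
    have "f (\<Sum>x\<in>g`C. s1 (u x) x) = (\<Sum>c\<in>C. s2 (u (g c)) c)"
      using g by (simp add: sum.reindex[OF injg] linear_sum[OF lin] linear_scale[OF lin])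
    moreover have "f (\<Sum>x\<in>?B. s1 (u x) x) = 0" using sum0 linear_0[OF lin] by simp
    ultimately have "(\<Sum>c\<in>C. s2 (u (g c)) c) = 0"
      using split fK linear_add[OF lin] by simp
    then have uC: "\<forall>c\<in>C. u (g c) = 0"
      using vs2.independentD[OF C(3) C(1) subset_refl, of "\<lambda>c. u (g c)"] by blast
    then have "(\<Sum>x\<in>g`C. s1 (u x) x) = 0" by (simp add: sum.reindex[OF injg])
    then have "(\<Sum>x\<in>K. s1 (u x) x) = 0" using split sum0 by simp
    then have "\<forall>k\<in>K. u k = 0" using vs1.independentD[OF K(3) K(1) subset_refl, of u] by blast
    then show "u x = 0" using uC xB by blast
  qed
  have "vs1.dim S = card ?B"
    using vs1.basis_card_eq_dim[OF BS spanB indB] by simp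
  also have "\<dots> = card K + card C"
    using K(1) C(1) disj by (simp add: card_Un_disjoint card_image[OF injg])
  finally show ?thesis using K(5) C(5) Bfin spanB by auto
qed

end


lemma vs_fun: "vector_space s \<Longrightarrow> vector_space (fun_scale s)"
  unfolding vector_space_def fun_scale_def by (simp add: fun_eq_iff)

lemma fun_scale_apply: "fun_scale s c w x = s c (w x)"
  by (simp add: fun_scale_def)

definition Wsp :: "'b set \<Rightarrow> ('b \<Rightarrow> 'x set) \<Rightarrow> ('b \<Rightarrow> 'x::ab_group_add) set" where
  "Wsp I S = {w. (\<forall>i\<in>I. w i \<in> S i) \<and> (\<forall>i. i \<notin> I \<longrightarrow> w i = 0)}"

lemma Wsp_subspace:
  assumes vs: "vector_space s" and S: "\<forall>i\<in>I. module.subspace s (S i)"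
  shows "module.subspace (fun_scale s) (Wsp I S)"
proof -
  interpret v: vector_space s by fact
  interpret w: vector_space "fun_scale s" by (rule vs_fun[OF vs])
  show ?thesis
    using S v.subspace_0 v.subspace_add v.subspace_scale fun_scale_apply
    by (intro w.subspaceI) (auto simp: Wsp_def fun_scale_apply)
qed

lemma Wsp_dim:
  assumes vs: "vector_space s" and fin: "finite I"
    and S: "\<forall>i\<in>I. module.subspace s (S i) \<and> (\<exists>F. finite F \<and> S i \<subseteq> module.span s F)"
  shows "vector_space.dim (fun_scale s) (Wsp I S) = (\<Sum>i\<in>I. vector_space.dim s (S i))
         \<and> (\<exists>F. finite F \<and> Wsp I S \<subseteq> module.span (fun_scale s) F)"
  using fin S
proof (induction I rule: finite_induct)
  case empty
  interpret w: vector_space "fun_scale s" by (rule vs_fun[OF vs])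
  have "Wsp {} S = {0}" by (auto simp: Wsp_def fun_eq_iff)
  then show ?case using w.dim_zero_set by auto
next
  case (insert a I)
  interpret v: vector_space s by fact
  interpret w: vector_space "fun_scale s" by (rule vs_fun[OF vs])
  interpret p: vector_space_pair "fun_scale s" s by unfold_locales
  have lin: "Vector_Spaces.linear (fun_scale s) s (\<lambda>w. w a)"
  proof (rule Vector_Spaces.linear_iff[THEN iffD2], intro conjI allI)
    show "vector_space (fun_scale s)" by (rule vs_fun[OF vs])
    show "vector_space s" by (rule vs)
    show "(x + y) a = x a + y a" for x y :: "_ \<Rightarrow> _" by simp
    show "fun_scale s c x a = s c (x a)" for c x by (simp add: fun_scale_def)
  qed
  have sub: "w.subspace (Wsp (insert a I) S)"
    using insert.prems by (intro Wsp_subspace[OF vs]) auto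
  have ker: "Wsp (insert a I) S \<inter> {w. w a = 0} = Wsp I S"
    using insert.hyps insert.prems v.subspace_0 by (auto simp: Wsp_def; metis)
  have img: "(\<lambda>w. w a) ` Wsp (insert a I) S = S a"
  proof
    show "(\<lambda>w. w a) ` Wsp (insert a I) S \<subseteq> S a" by (auto simp: Wsp_def)
    show "S a \<subseteq> (\<lambda>w. w a) ` Wsp (insert a I) S"
    proof
      fix c assume c: "c \<in> S a"
      have "(\<lambda>i. if i = a then c else 0) \<in> Wsp (insert a I) S"
        using c insert.prems v.subspace_0 by (auto simp: Wsp_def)
      then show "c \<in> (\<lambda>w. w a) ` Wsp (insert a I) S"
        by (intro image_eqI[of _ _ "\<lambda>i. if i = a then c else 0"]) simp_all
    qed
  qed
  have pI: "\<forall>i\<in>I. v.subspace (S i) \<and> (\<exists>F. finite F \<and> S i \<subseteq> v.span F)"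
    using insert.prems by auto
  have IH: "w.dim (Wsp I S) = (\<Sum>i\<in>I. v.dim (S i))" "\<exists>F. finite F \<and> Wsp I S \<subseteq> w.span F"
    using insert.IH[OF pI] by auto
  obtain F1 where F1: "finite F1" "Wsp I S \<subseteq> w.span F1" using IH(2) by auto
  have "\<exists>F. finite F \<and> S a \<subseteq> v.span F" using insert.prems by auto
  then obtain F2 where F2: "finite F2" "S a \<subseteq> v.span F2" by auto
  have "w.dim (Wsp (insert a I) S) = v.dim ((\<lambda>w. w a) ` Wsp (insert a I) S)
         + w.dim (Wsp (insert a I) S \<inter> {w. w a = 0}) \<and> (\<exists>F. finite F \<and> Wsp (insert a I) S \<subseteq> w.span F)"
    by (rule p.rank_nullity[OF lin sub F1(1) _ F2(1)]) (simp_all only: ker img F1(2) F2(2))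
  then have "w.dim (Wsp (insert a I) S) = v.dim (S a) + w.dim (Wsp I S)"
     "\<exists>F. finite F \<and> Wsp (insert a I) S \<subseteq> w.span F"
    by (simp_all only: ker img)
  then show ?case using insert.hyps IH(1) by (simp add: sum.insert)
qed



lemma sum_fun_apply: "(\<Sum>p\<in>P. h p) x = (\<Sum>p\<in>P. h p x)"
  by (induct P rule: infinite_finite_induct) auto

definition bp :: "'p \<Rightarrow> 'p \<Rightarrow> 'k::field" where
  "bp p = (\<lambda>q. if q = p then 1 else 0)"

definition supp :: "('p \<Rightarrow> 'k::zero) \<Rightarrow> 'p set" where
  "supp f = {p. f p \<noteq> 0}"

lemma vtx_bp: "vtx v = bp (v, [])"
  by (simp add: vtx_def bp_def fun_eq_iff)

lemma pa_add_eq: "pa_add f g = f + g"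
  by (simp add: pa_add_def fun_eq_iff)

lemma chain_from_append:
  "chain_from src tgt v (as @ bs) \<longleftrightarrow> chain_from src tgt v as \<and> chain_from src tgt (path_end tgt (v, as)) bs"
  by (induction as arbitrary: v) (auto simp: path_end_def)

lemma path_end_Cons: "path_end tgt (v, a # as) = path_end tgt (tgt a, as)"
  by (simp add: path_end_def)

lemma path_end_append: "path_end tgt (v, as @ bs) = path_end tgt (path_end tgt (v, as), bs)"
  by (simp add: path_end_def)

lemma bp_mult: "pa_mult tgt (bp p :: _ \<Rightarrow> 'k::field) (bp q) =
   (if composable tgt p q then bp (path_comp p q) else 0)"
proof (rule ext)
  fix r
  have S: "{(p', q'). bp p p' \<noteq> (0::'k) \<and> bp q q' \<noteq> (0::'k) \<and> composable tgt p' q' \<and> path_comp p' q' = r}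
        = (if composable tgt p q \<and> path_comp p q = r then {(p, q)} else {})"
    by (auto simp: bp_def)
  show "pa_mult tgt (bp p :: _ \<Rightarrow> 'k::field) (bp q) r = (if composable tgt p q then bp (path_comp p q) else 0) r"
    unfolding pa_mult_def S by (auto simp: bp_def)
qed

locale qsetup =
  fixes V :: "'v set" and Ar :: "'a set" and src tgt :: "'a \<Rightarrow> 'v"
    and sc :: "'k::field \<Rightarrow> 'x::ab_group_add \<Rightarrow> 'x"
    and lact :: "('v \<times> 'a list \<Rightarrow> 'k) \<Rightarrow> 'x \<Rightarrow> 'x"
    and ract :: "'x \<Rightarrow> ('v \<times> 'a list \<Rightarrow> 'k) \<Rightarrow> 'x"
  assumes quiv: "quiver V Ar src tgt"
    and bim: "pa_bimodule V Ar src tgt sc lact ract"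
    and fd: "fin_dim sc"
begin

abbreviation "A \<equiv> pathalg V Ar src tgt"
abbreviation "valid \<equiv> valid_path V Ar src tgt"
abbreviation "mul \<equiv> pa_mult tgt"

lemma vs: "vector_space sc" using bim by (simp add: pa_bimodule_def Let_def)

sublocale X: vector_space sc by (rule vs)

lemma lact_add: "f \<in> A \<Longrightarrow> lact f (m + n) = lact f m + lact f n"
  and ract_add: "f \<in> A \<Longrightarrow> ract (m + n) f = ract m f + ract n f"
  and lact_fadd: "f \<in> A \<Longrightarrow> g \<in> A \<Longrightarrow> lact (f + g) m = lact f m + lact g m"
  and ract_fadd: "f \<in> A \<Longrightarrow> g \<in> A \<Longrightarrow> ract m (f + g) = ract m f + ract m g"
  and lact_fscale: "f \<in> A \<Longrightarrow> lact (pa_scale c f) m = sc c (lact f m)"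
  and lact_sc: "f \<in> A \<Longrightarrow> lact f (sc c m) = sc c (lact f m)"
  and ract_fscale: "f \<in> A \<Longrightarrow> ract m (pa_scale c f) = sc c (ract m f)"
  and ract_sc: "f \<in> A \<Longrightarrow> ract (sc c m) f = sc c (ract m f)"
  and lact_mul: "f \<in> A \<Longrightarrow> g \<in> A \<Longrightarrow> lact (mul f g) m = lact f (lact g m)"
  and ract_mul: "f \<in> A \<Longrightarrow> g \<in> A \<Longrightarrow> ract m (mul f g) = ract (ract m f) g"
  and lr_comm: "f \<in> A \<Longrightarrow> g \<in> A \<Longrightarrow> ract (lact f m) g = lact f (ract m g)"
  and lact_one: "lact (pa_one V) m = m"
  and ract_one: "ract m (pa_one V) = m"
  using bim by (simp_all add: pa_bimodule_def Let_def pa_add_eq)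

lemma finV: "finite V" and finAr: "finite Ar" and srcV: "\<alpha> \<in> Ar \<Longrightarrow> src \<alpha> \<in> V"
  and tgtV: "\<alpha> \<in> Ar \<Longrightarrow> tgt \<alpha> \<in> V"
  using quiv by (auto simp: quiver_def)

lemma A_iff: "f \<in> A \<longleftrightarrow> finite (supp f) \<and> (\<forall>p\<in>supp f. valid p)"
  by (auto simp: pathalg_def supp_def)

lemma zero_A: "0 \<in> A" by (simp add: A_iff supp_def)

lemma bp_A: "valid p \<Longrightarrow> bp p \<in> A"
  by (auto simp: pathalg_def bp_def)

lemma add_A: "f \<in> A \<Longrightarrow> g \<in> A \<Longrightarrow> f + g \<in> A"
proof -
  assume f: "f \<in> A" and g: "g \<in> A"
  have "supp (f + g) \<subseteq> supp f \<union> supp g" by (auto simp: supp_def)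
  with f g show ?thesis unfolding A_iff by (meson Un_iff finite_UnI finite_subset subsetD)
qed

lemma scale_A: "f \<in> A \<Longrightarrow> pa_scale c f \<in> A"
proof -
  assume f: "f \<in> A"
  have "supp (pa_scale c f) \<subseteq> supp f" by (auto simp: supp_def pa_scale_def)
  with f show ?thesis unfolding A_iff by (meson finite_subset subsetD)
qed

lemma sum_A: "(\<And>p. p \<in> P \<Longrightarrow> h p \<in> A) \<Longrightarrow> (\<Sum>p\<in>P. h p) \<in> A"
  by (induct P rule: infinite_finite_induct) (auto simp: zero_A add_A)

lemma valid_comp:
  assumes "valid p" "valid q" "composable tgt p q"
  shows "valid (path_comp p q)"
  using assms by (auto simp: valid_path_def path_comp_def composable_def chain_from_append)

lemma mul_A: "f \<in> A \<Longrightarrow> g \<in> A \<Longrightarrow> mul f g \<in> A"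
proof -
  assume f: "f \<in> A" and g: "g \<in> A"
  let ?P = "{(p, q). p \<in> supp f \<and> q \<in> supp g \<and> composable tgt p q}"
  have finP: "finite ?P"
    by (rule finite_subset[of _ "supp f \<times> supp g"]) (use f g in \<open>auto simp: A_iff\<close>)
  have "supp (mul f g) \<subseteq> (\<lambda>(p, q). path_comp p q) ` ?P"
  proof
    fix r assume "r \<in> supp (mul f g)"
    then have ne: "mul f g r \<noteq> 0" by (simp add: supp_def)
    have "{(p, q). f p \<noteq> 0 \<and> g q \<noteq> 0 \<and> composable tgt p q \<and> path_comp p q = r} \<noteq> {}"
    proof
      assume "{(p, q). f p \<noteq> 0 \<and> g q \<noteq> 0 \<and> composable tgt p q \<and> path_comp p q = r} = {}"
      then have "mul f g r = 0" unfolding pa_mult_def by (simp only: sum.empty)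
      with ne show False by simp
    qed
    then show "r \<in> (\<lambda>(p, q). path_comp p q) ` ?P" by (auto simp: supp_def)
  qed
  moreover have "\<forall>r\<in>(\<lambda>(p, q). path_comp p q) ` ?P. valid r"
    using f g valid_comp by (auto simp: A_iff)
  ultimately show ?thesis using finP unfolding A_iff by (meson finite_imageI finite_subset subsetD)
qed

lemma lact_zero: "f \<in> A \<Longrightarrow> lact f 0 = 0"
  using lact_add[of f 0 0] by simp

lemma ract_zero: "f \<in> A \<Longrightarrow> ract 0 f = 0"
  using ract_add[of f 0 0] by simp

lemma pa_scale_0: "pa_scale 0 f = 0"
  by (simp add: pa_scale_def fun_eq_iff)

lemma lact_fzero: "lact 0 m = 0"
  using lact_fscale[OF zero_A, of 0 m] by (simp add: pa_scale_0)

lemma ract_fzero: "ract m 0 = 0"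
  using ract_fscale[OF zero_A, of m 0] by (simp add: pa_scale_0)

lemma lact_diff: "f \<in> A \<Longrightarrow> lact f (m - n) = lact f m - lact f n"
  by (metis add_diff_cancel_right' diff_add_cancel lact_add)

lemma ract_diff: "f \<in> A \<Longrightarrow> ract (m - n) f = ract m f - ract n f"
  by (metis add_diff_cancel_right' diff_add_cancel ract_add)

lemma lact_sum: "f \<in> A \<Longrightarrow> lact f (\<Sum>i\<in>I. x i) = (\<Sum>i\<in>I. lact f (x i))"
  by (induct I rule: infinite_finite_induct) (auto simp: lact_zero lact_add)

lemma ract_sum: "f \<in> A \<Longrightarrow> ract (\<Sum>i\<in>I. x i) f = (\<Sum>i\<in>I. ract (x i) f)"
  by (induct I rule: infinite_finite_induct) (auto simp: ract_zero ract_add)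

lemma lact_fsum: "(\<And>i. i \<in> I \<Longrightarrow> h i \<in> A) \<Longrightarrow> lact (\<Sum>i\<in>I. h i) m = (\<Sum>i\<in>I. lact (h i) m)"
proof (induct I rule: infinite_finite_induct)
  case (insert i I)
  have "lact (\<Sum>j\<in>insert i I. h j) m = lact (h i + (\<Sum>i\<in>I. h i)) m"
    by (subst sum.insert) (use insert.hyps in auto)
  also have "\<dots> = lact (h i) m + lact (\<Sum>i\<in>I. h i) m"
    by (rule lact_fadd) (use insert.prems in \<open>auto intro: sum_A\<close>)
  also have "\<dots> = lact (h i) m + (\<Sum>i\<in>I. lact (h i) m)" using insert by auto
  also have "\<dots> = (\<Sum>j\<in>insert i I. lact (h j) m)" using insert.hyps by simp
  finally show ?case .
qed (auto simp: lact_fzero)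

lemma ract_fsum: "(\<And>i. i \<in> I \<Longrightarrow> h i \<in> A) \<Longrightarrow> ract m (\<Sum>i\<in>I. h i) = (\<Sum>i\<in>I. ract m (h i))"
proof (induct I rule: infinite_finite_induct)
  case (insert i I)
  have "ract m (\<Sum>j\<in>insert i I. h j) = ract m (h i + (\<Sum>i\<in>I. h i))"
    by (subst sum.insert) (use insert.hyps in auto)
  also have "\<dots> = ract m (h i) + ract m (\<Sum>i\<in>I. h i)"
    by (rule ract_fadd) (use insert.prems in \<open>auto intro: sum_A\<close>)
  also have "\<dots> = ract m (h i) + (\<Sum>i\<in>I. ract m (h i))" using insert by auto
  also have "\<dots> = (\<Sum>j\<in>insert i I. ract m (h j))" using insert.hyps by simp
  finally show ?case .
qed (auto simp: ract_fzero)

lemma expand: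
  assumes "finite P" "supp f \<subseteq> P"
  shows "f = (\<Sum>p\<in>P. pa_scale (f p) (bp p))"
proof (rule ext)
  fix q
  have "(\<Sum>p\<in>P. pa_scale (f p) (bp p)) q = (\<Sum>p\<in>P. if q = p then f p else 0)"
    by (simp add: sum_fun_apply pa_scale_def bp_def if_distrib cong: if_cong)
  also have "\<dots> = f q" using assms by (auto simp: supp_def)
  finally show "f q = (\<Sum>p\<in>P. pa_scale (f p) (bp p)) q" by simp
qed

lemma lact_expand:
  assumes f: "f \<in> A" and P: "finite P" "supp f \<subseteq> P" "\<forall>p\<in>P. valid p"
  shows "lact f m = (\<Sum>p\<in>P. sc (f p) (lact (bp p) m))"
proof -
  have "lact f m = lact (\<Sum>p\<in>P. pa_scale (f p) (bp p)) m" using expand[OF P(1,2)] by simp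
  also have "\<dots> = (\<Sum>p\<in>P. sc (f p) (lact (bp p) m))"
    using P(3) by (simp add: lact_fsum scale_A bp_A lact_fscale)
  finally show ?thesis .
qed

lemma ract_expand:
  assumes f: "f \<in> A" and P: "finite P" "supp f \<subseteq> P" "\<forall>p\<in>P. valid p"
  shows "ract m f = (\<Sum>p\<in>P. sc (f p) (ract m (bp p)))"
proof -
  have "ract m f = ract m (\<Sum>p\<in>P. pa_scale (f p) (bp p))" using expand[OF P(1,2)] by simp
  also have "\<dots> = (\<Sum>p\<in>P. sc (f p) (ract m (bp p)))"
    using P(3) by (simp add: ract_fsum scale_A bp_A ract_fscale)
  finally show ?thesis .
qed

lemma supp_A: "f \<in> A \<Longrightarrow> finite (supp f) \<and> (\<forall>p\<in>supp f. valid p)"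
  by (simp add: A_iff)

end



lemma mul_vv: "pa_mult tgt (vtx u) (vtx v :: _ \<Rightarrow> 'k::field) = (if u = v then vtx v else 0)"
  by (simp add: vtx_bp bp_mult composable_def path_end_def path_comp_def)

lemma mul_end: "pa_mult tgt (vtx (path_end tgt p)) (bp p :: _ \<Rightarrow> 'k::field) = bp p"
  by (simp add: vtx_bp bp_mult composable_def path_comp_def)

lemma mul_start: "pa_mult tgt (bp p) (vtx (fst p) :: _ \<Rightarrow> 'k::field) = bp p"
  by (simp add: vtx_bp bp_mult composable_def path_comp_def path_end_def)

lemma mul_end0: "path_end tgt p \<noteq> u \<Longrightarrow> pa_mult tgt (vtx u) (bp p :: _ \<Rightarrow> 'k::field) = 0"
  by (simp add: vtx_bp bp_mult composable_def)

lemma mul_start0: "fst p \<noteq> u \<Longrightarrow> pa_mult tgt (bp p) (vtx u :: _ \<Rightarrow> 'k::field) = 0"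
  by (simp add: vtx_bp bp_mult composable_def path_end_def)

lemma mul_cons: "src \<alpha> = v \<Longrightarrow>
  pa_mult tgt (bp (tgt \<alpha>, as)) (bp (v, [\<alpha>]) :: _ \<Rightarrow> 'k::field) = bp (v, \<alpha> # as)"
  by (simp add: bp_mult composable_def path_comp_def path_end_def)

lemma mul_comp: "composable tgt p q \<Longrightarrow>
  pa_mult tgt (bp p) (bp q :: _ \<Rightarrow> 'k::field) = bp (path_comp p q)"
  by (simp add: bp_mult)

context qsetup begin

definition "Der = derivations V Ar src tgt sc lact ract"
definition delta :: "'x \<Rightarrow> ('v \<times> 'a list \<Rightarrow> 'k) \<Rightarrow> 'x" where
  "delta m = (\<lambda>f. if f \<in> A then lact f m - ract m f else 0)"
definition Phi :: "(('v \<times> 'a list \<Rightarrow> 'k) \<Rightarrow> 'x) \<Rightarrow> 'v \<Rightarrow> 'x" where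
  "Phi D = (\<lambda>v. if v \<in> V then D (vtx v) else 0)"
definition arr :: "'a \<Rightarrow> 'v \<times> 'a list \<Rightarrow> 'k" where "arr \<alpha> = bp (src \<alpha>, [\<alpha>])"
definition Lam :: "(('v \<times> 'a list \<Rightarrow> 'k) \<Rightarrow> 'x) \<Rightarrow> 'a \<Rightarrow> 'x" where
  "Lam D = (\<lambda>\<alpha>. if \<alpha> \<in> Ar then D (arr \<alpha>) else 0)"

lemma valid_vtx: "v \<in> V \<Longrightarrow> valid (v, [])"
  by (simp add: valid_path_def)

lemma vtx_A: "v \<in> V \<Longrightarrow> vtx v \<in> A"
  by (simp add: vtx_bp bp_A valid_vtx)

lemma valid_arr: "\<alpha> \<in> Ar \<Longrightarrow> valid (src \<alpha>, [\<alpha>])"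
  by (simp add: valid_path_def srcV)

lemma arr_A: "\<alpha> \<in> Ar \<Longrightarrow> arr \<alpha> \<in> A"
  by (simp add: arr_def bp_A valid_arr)

lemma Der_iff: "D \<in> Der \<longleftrightarrow> (\<forall>f. f \<notin> A \<longrightarrow> D f = 0)
        \<and> (\<forall>f\<in>A. \<forall>g\<in>A. D (f + g) = D f + D g)
        \<and> (\<forall>f\<in>A. \<forall>c. D (pa_scale c f) = sc c (D f))
        \<and> (\<forall>f\<in>A. \<forall>g\<in>A. D (mul f g) = ract (D f) g + lact f (D g))"
  by (simp add: Der_def derivations_def Let_def pa_add_eq)

lemma Der_out: "D \<in> Der \<Longrightarrow> f \<notin> A \<Longrightarrow> D f = 0"
  and Der_add: "D \<in> Der \<Longrightarrow> f \<in> A \<Longrightarrow> g \<in> A \<Longrightarrow> D (f + g) = D f + D g"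
  and Der_scale: "D \<in> Der \<Longrightarrow> f \<in> A \<Longrightarrow> D (pa_scale c f) = sc c (D f)"
  and Der_mul: "D \<in> Der \<Longrightarrow> f \<in> A \<Longrightarrow> g \<in> A \<Longrightarrow> D (mul f g) = ract (D f) g + lact f (D g)"
  by (simp_all add: Der_iff)

lemma Der_zero: "D \<in> Der \<Longrightarrow> D 0 = 0"
  using Der_scale[OF _ zero_A, of D 0] by (simp add: pa_scale_0)

lemma Der_sum: "D \<in> Der \<Longrightarrow> (\<And>i. i \<in> I \<Longrightarrow> h i \<in> A) \<Longrightarrow> D (\<Sum>i\<in>I. h i) = (\<Sum>i\<in>I. D (h i))"
proof (induct I rule: infinite_finite_induct)
  case (insert i I)
  have "D (\<Sum>j\<in>insert i I. h j) = D (h i + (\<Sum>i\<in>I. h i))"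
    by (subst sum.insert) (use insert.hyps in auto)
  also have "\<dots> = D (h i) + D (\<Sum>i\<in>I. h i)"
    by (rule Der_add) (use insert.prems in \<open>auto intro: sum_A\<close>)
  also have "\<dots> = D (h i) + (\<Sum>i\<in>I. D (h i))" using insert by auto
  also have "\<dots> = (\<Sum>j\<in>insert i I. D (h j))" using insert.hyps by simp
  finally show ?case .
qed (auto simp: Der_zero)

lemma FS: "vector_space (fun_scale sc :: 'k \<Rightarrow> ('b \<Rightarrow> 'x) \<Rightarrow> _)"
  by (rule vs_fun[OF vs])

lemma Der_subspace: "module.subspace (fun_scale sc) Der"
proof -
  interpret F: vector_space "fun_scale sc :: 'k \<Rightarrow> (('v \<times> 'a list \<Rightarrow> 'k) \<Rightarrow> 'x) \<Rightarrow> _" by (rule FS)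
  show ?thesis
  proof (rule F.subspaceI)
    show "0 \<in> Der" by (simp add: Der_iff ract_zero lact_zero)
    show "x + y \<in> Der" if "x \<in> Der" "y \<in> Der" for x y
      using that unfolding Der_iff
      by (simp add: X.scale_right_distrib ract_add lact_add algebra_simps)
    show "fun_scale sc c x \<in> Der" if "x \<in> Der" for c x
      using that unfolding Der_iff
      by (simp add: fun_scale_def X.scale_right_distrib ract_sc lact_sc X.scale_left_commute)
  qed
qed

lemma delta_Der: "delta m \<in> Der"
  unfolding Der_iff delta_def
  by (auto simp: add_A mul_A scale_A lact_fadd ract_fadd lact_mul ract_mul ract_diff lact_diff lr_comm
      lact_fscale ract_fscale X.scale_right_diff_distrib)

lemma Inn_eq: "inner_derivations V Ar src tgt lact ract = range delta"
  by (auto simp: inner_derivations_def delta_def)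

lemma delta_linear: "Vector_Spaces.linear sc (fun_scale sc) delta"
proof (rule Vector_Spaces.linear_iff[THEN iffD2], intro conjI allI)
  show "vector_space sc" by (rule vs)
  show "vector_space (fun_scale sc)" by (rule FS)
  show "delta (x + y) = delta x + delta y" for x y
    by (rule ext) (simp add: delta_def lact_add ract_add)
  show "delta (sc c x) = fun_scale sc c (delta x)" for c x
    by (rule ext) (simp add: delta_def fun_scale_def lact_sc ract_sc X.scale_right_diff_distrib)
qed

lemma Phi_linear: "Vector_Spaces.linear (fun_scale sc) (fun_scale sc) Phi"
proof (rule Vector_Spaces.linear_iff[THEN iffD2], intro conjI allI)
  show "vector_space (fun_scale sc :: 'k \<Rightarrow> (('v \<times> 'a list \<Rightarrow> 'k) \<Rightarrow> 'x) \<Rightarrow> _)" by (rule FS)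
  show "vector_space (fun_scale sc :: 'k \<Rightarrow> ('v \<Rightarrow> 'x) \<Rightarrow> _)" by (rule FS)
  show "Phi (x + y) = Phi x + Phi y" for x y
    by (rule ext) (simp add: Phi_def)
  show "Phi (fun_scale sc c x) = fun_scale sc c (Phi x)" for c x
    by (rule ext) (simp add: Phi_def fun_scale_def)
qed

lemma Lam_linear: "Vector_Spaces.linear (fun_scale sc) (fun_scale sc) Lam"
proof (rule Vector_Spaces.linear_iff[THEN iffD2], intro conjI allI)
  show "vector_space (fun_scale sc :: 'k \<Rightarrow> (('v \<times> 'a list \<Rightarrow> 'k) \<Rightarrow> 'x) \<Rightarrow> _)" by (rule FS)
  show "vector_space (fun_scale sc :: 'k \<Rightarrow> ('a \<Rightarrow> 'x) \<Rightarrow> _)" by (rule FS)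
  show "Lam (x + y) = Lam x + Lam y" for x y
    by (rule ext) (simp add: Lam_def)
  show "Lam (fun_scale sc c x) = fun_scale sc c (Lam x)" for c x
    by (rule ext) (simp add: Lam_def fun_scale_def)
qed

end



context qsetup begin

lemma mul_vv': "mul (vtx u) (vtx v :: 'v \<times> 'a list \<Rightarrow> 'k) = (if u = v then vtx v else 0)"
  by (rule mul_vv)

lemma mul_cons': "src \<alpha> = v \<Longrightarrow> mul (bp (tgt \<alpha>, as)) (bp (v, [\<alpha>]) :: 'v \<times> 'a list \<Rightarrow> 'k) = bp (v, \<alpha> # as)"
  by (rule mul_cons)

lemma mul_end': "mul (vtx (path_end tgt p)) (bp p :: 'v \<times> 'a list \<Rightarrow> 'k) = bp p"
  by (rule mul_end)

lemma mul_start': "mul (bp p) (vtx (fst p) :: 'v \<times> 'a list \<Rightarrow> 'k) = bp p"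
  by (rule mul_start)

lemma lact_neg: "f \<in> A \<Longrightarrow> lact f (- x) = - lact f x"
  using lact_diff[of f 0 x] by (simp add: lact_zero)

lemma ract_neg: "f \<in> A \<Longrightarrow> ract (- x) f = - ract x f"
  using ract_diff[of f 0 x] by (simp add: ract_zero)

lemma pa_one_sum: "pa_one V = (\<Sum>u\<in>V. vtx u :: 'v \<times> 'a list \<Rightarrow> 'k)"
proof (rule ext)
  fix p :: "'v \<times> 'a list"
  obtain a b where p: "p = (a, b)" by force
  have "(\<Sum>u\<in>V. vtx u :: _ \<Rightarrow> 'k) p = (\<Sum>u\<in>V. if a = u then (if b = [] then 1 else 0) else (0::'k))"
    by (simp add: sum_fun_apply vtx_def p)
  also have "\<dots> = pa_one V p" using finV by (simp add: pa_one_def p)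
  finally show "pa_one V p = (\<Sum>u\<in>V. vtx u :: _ \<Rightarrow> 'k) p" by simp
qed

lemma ract_sum_vtx: "ract x (pa_one V) = (\<Sum>u\<in>V. ract x (vtx u))"
  by (simp add: pa_one_sum ract_fsum vtx_A)

lemma Phi_Der_delta:
  assumes D: "D \<in> Der"
  shows "\<exists>m. Phi D = Phi (delta m)"
proof -
  let ?e = "vtx :: 'v \<Rightarrow> 'v \<times> 'a list \<Rightarrow> 'k"
  define m where "m = - (\<Sum>u\<in>V. ract (D (?e u)) (?e u))"
  have F1: "lact (?e v) (D (?e u)) = - ract (D (?e v)) (?e u)" if "u \<in> V" "v \<in> V" "u \<noteq> v" for u v
  proof -
    have "D (mul (?e v) (?e u)) = 0" using that mul_vv'[of v u] Der_zero[OF D] by simp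
    then have "ract (D (?e v)) (?e u) + lact (?e v) (D (?e u)) = 0"
      using Der_mul[OF D vtx_A vtx_A] that by simp
    then show ?thesis by (simp add: eq_neg_iff_add_eq_0 add.commute)
  qed
  have F2: "lact (?e v) (ract (D (?e v)) (?e v)) = 0" if "v \<in> V" for v
  proof -
    have ee: "mul (?e v) (?e v) = ?e v" by (simp add: mul_vv')
    have "D (?e v) = ract (D (?e v)) (?e v) + lact (?e v) (D (?e v))"
      using Der_mul[OF D vtx_A[OF that] vtx_A[OF that]] ee by simp
    then have l: "lact (?e v) (D (?e v)) = D (?e v) - ract (D (?e v)) (?e v)" by (simp add: algebra_simps)
    have "lact (?e v) (ract (D (?e v)) (?e v)) = ract (lact (?e v) (D (?e v))) (?e v)"
      using lr_comm[OF vtx_A[OF that] vtx_A[OF that]] by simp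
    also have "\<dots> = ract (D (?e v)) (?e v) - ract (ract (D (?e v)) (?e v)) (?e v)"
      by (simp add: l ract_diff vtx_A that)
    also have "ract (ract (D (?e v)) (?e v)) (?e v) = ract (D (?e v)) (?e v)"
      using ract_mul[OF vtx_A[OF that] vtx_A[OF that]] ee by simp
    finally show ?thesis by simp
  qed
  have "Phi D v = Phi (delta m) v" for v
  proof (cases "v \<in> V")
    case False then show ?thesis by (simp add: Phi_def)
  next
    case v: True
    have T: "lact (?e v) (ract (D (?e u)) (?e u)) = (if u = v then 0 else - ract (D (?e v)) (?e u))"
      if u: "u \<in> V" for u
    proof (cases "u = v")
      case True then show ?thesis using F2 v by simp
    next
      case False
      have "lact (?e v) (ract (D (?e u)) (?e u)) = ract (lact (?e v) (D (?e u))) (?e u)"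
        using lr_comm[OF vtx_A[OF v] vtx_A[OF u]] by simp
      also have "\<dots> = - ract (ract (D (?e v)) (?e u)) (?e u)"
        using F1[OF u v False] by (simp add: ract_neg vtx_A u)
      also have "ract (ract (D (?e v)) (?e u)) (?e u) = ract (D (?e v)) (?e u)"
        using ract_mul[OF vtx_A[OF u] vtx_A[OF u]] by (simp add: mul_vv')
      finally show ?thesis using False by simp
    qed
    have "lact (?e v) m = - (\<Sum>u\<in>V. lact (?e v) (ract (D (?e u)) (?e u)))"
      by (simp add: m_def lact_neg lact_sum vtx_A v)
    also have "(\<Sum>u\<in>V. lact (?e v) (ract (D (?e u)) (?e u)))
        = (\<Sum>u\<in>V. (if u = v then 0 else - ract (D (?e v)) (?e u)))"
      using T by (rule sum.cong[OF refl])
    also have "\<dots> = - (\<Sum>u\<in>V - {v}. ract (D (?e v)) (?e u))"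
      using finV by (simp add: sum.If_cases sum_negf Diff_eq)
    also have "(\<Sum>u\<in>V - {v}. ract (D (?e v)) (?e u)) = D (?e v) - ract (D (?e v)) (?e v)"
    proof -
      have "D (?e v) = (\<Sum>u\<in>V. ract (D (?e v)) (?e u))"
        using ract_sum_vtx ract_one by simp
      also have "\<dots> = ract (D (?e v)) (?e v) + (\<Sum>u\<in>V - {v}. ract (D (?e v)) (?e u))"
        using finV v by (simp add: sum.remove)
      finally show ?thesis by (simp add: algebra_simps)
    qed
    finally have L: "lact (?e v) m = D (?e v) - ract (D (?e v)) (?e v)" by simp
    have "ract m (?e v) = - (\<Sum>u\<in>V. ract (ract (D (?e u)) (?e u)) (?e v))"
      by (simp add: m_def ract_neg ract_sum vtx_A v)
    also have "(\<Sum>u\<in>V. ract (ract (D (?e u)) (?e u)) (?e v)) = (\<Sum>u\<in>V. if u = v then ract (D (?e v)) (?e v) else 0)"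
    proof (rule sum.cong[OF refl])
      fix u assume u: "u \<in> V"
      have "ract (ract (D (?e u)) (?e u)) (?e v) = ract (D (?e u)) (mul (?e u) (?e v))"
        using ract_mul[OF vtx_A[OF u] vtx_A[OF v]] by simp
      then show "ract (ract (D (?e u)) (?e u)) (?e v) = (if u = v then ract (D (?e v)) (?e v) else 0)"
        by (simp add: mul_vv' ract_fzero)
    qed
    also have "\<dots> = ract (D (?e v)) (?e v)" using finV v by simp
    finally have R: "ract m (?e v) = - ract (D (?e v)) (?e v)" .
    show ?thesis using v L R by (simp add: Phi_def delta_def vtx_A)
  qed
  then show ?thesis by blast
qed

lemma ker_delta: "{m. delta m = 0} = invariants lact ract A"
  by (auto simp: delta_def invariants_def fun_eq_iff)

lemma ker_Phi_delta: "{m. Phi (delta m) = 0} = invariants lact ract (vertex_subalg V Ar src tgt)"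
proof (intro set_eqI iffI)
  fix m assume "m \<in> {m. Phi (delta m) = 0}"
  then have vm: "lact (vtx v) m = ract m (vtx v)" if "v \<in> V" for v
    using that by (auto simp: Phi_def delta_def fun_eq_iff vtx_A dest!: spec[of _ v])
  show "m \<in> invariants lact ract (vertex_subalg V Ar src tgt)"
    unfolding invariants_def
  proof (intro CollectI ballI)
    fix f :: "'v \<times> 'a list \<Rightarrow> 'k" assume "f \<in> vertex_subalg V Ar src tgt"
    then have f: "f \<in> A" and s: "\<forall>p. f p \<noteq> 0 \<longrightarrow> snd p = []" by (auto simp: vertex_subalg_def)
    have P: "finite (supp f)" "supp f \<subseteq> supp f" "\<forall>p\<in>supp f. valid p" using supp_A[OF f] by auto
    have "lact (bp p) m = ract m (bp p)" if "p \<in> supp f" for p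
    proof -
      have "snd p = []" "fst p \<in> V" using s that P(3) by (cases p, auto simp: supp_def valid_path_def)+
      then show ?thesis using vm[of "fst p"] by (cases p) (simp add: vtx_bp)
    qed
    then show "lact f m = ract m f"
      using lact_expand[OF f P] ract_expand[OF f P] by simp
  qed
next
  fix m assume m: "m \<in> invariants lact ract (vertex_subalg V Ar src tgt)"
  have "vtx v \<in> vertex_subalg V Ar src tgt" if "v \<in> V" for v
    using vtx_A[OF that] by (simp add: vertex_subalg_def vtx_def)
  then show "m \<in> {m. Phi (delta m) = 0}"
    using m by (auto simp: invariants_def Phi_def delta_def fun_eq_iff vtx_A)
qed

lemma Der_bp_zero:
  assumes D: "D \<in> Der" and P: "Phi D = 0" and L: "Lam D = 0"
  shows "valid (v, as) \<Longrightarrow> D (bp (v, as)) = 0"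
proof (induction as arbitrary: v)
  case Nil
  then have "v \<in> V" by (simp add: valid_path_def)
  then show ?case using P by (simp add: Phi_def fun_eq_iff vtx_bp split: if_splits)
next
  case (Cons \<alpha> as)
  then have a: "\<alpha> \<in> Ar" "src \<alpha> = v" and vr: "valid (tgt \<alpha>, as)"
    by (auto simp: valid_path_def tgtV)
  have "D (bp (v, \<alpha> # as)) = D (mul (bp (tgt \<alpha>, as)) (arr \<alpha>))"
    using mul_cons'[OF a(2)] a by (simp add: arr_def)
  also have "\<dots> = ract (D (bp (tgt \<alpha>, as))) (arr \<alpha>) + lact (bp (tgt \<alpha>, as)) (D (arr \<alpha>))"
    by (rule Der_mul[OF D bp_A[OF vr] arr_A[OF a(1)]])
  also have "D (arr \<alpha>) = 0" using L a(1) by (simp add: Lam_def fun_eq_iff) (metis)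
  finally show ?case using Cons.IH[OF vr] by (simp add: ract_zero arr_A a lact_zero bp_A vr)
qed

lemma Der_inj:
  assumes D: "D \<in> Der" and P: "Phi D = 0" and L: "Lam D = 0"
  shows "D = 0"
proof (rule ext)
  fix f
  show "D f = 0 f"
  proof (cases "f \<in> A")
    case False then show ?thesis using Der_out[OF D] by simp
  next
    case f: True
    have P': "finite (supp f)" "supp f \<subseteq> supp f" using supp_A[OF f] by auto
    have "D f = D (\<Sum>p\<in>supp f. pa_scale (f p) (bp p))" using expand[OF P'] by simp
    also have "\<dots> = (\<Sum>p\<in>supp f. D (pa_scale (f p) (bp p)))"
      using supp_A[OF f] by (intro Der_sum[OF D]) (auto intro: scale_A bp_A)
    also have "\<dots> = 0"
    proof (rule sum.neutral, rule ballI)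
      fix p assume "p \<in> supp f"
      then have vp: "valid p" using supp_A[OF f] by auto
      then have "D (bp p) = 0" using Der_bp_zero[OF D P L, of "fst p" "snd p"] by simp
      then show "D (pa_scale (f p) (bp p)) = 0" using Der_scale[OF D bp_A[OF vp]] by simp
    qed
    finally show ?thesis by simp
  qed
qed

definition "Cn \<alpha> = corner vtx lact ract (tgt \<alpha>) (src \<alpha>)"

lemma Lam_Wsp:
  assumes D: "D \<in> Der" and P: "Phi D = 0"
  shows "Lam D \<in> Wsp Ar Cn"
  unfolding Wsp_def
proof (intro CollectI conjI ballI allI impI)
  fix \<alpha> assume a: "\<alpha> \<in> Ar"
  let ?t = "vtx (tgt \<alpha>) :: 'v \<times> 'a list \<Rightarrow> 'k" and ?s = "vtx (src \<alpha>) :: 'v \<times> 'a list \<Rightarrow> 'k"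
  have Dt: "D ?t = 0" and Ds: "D ?s = 0" using P tgtV[OF a] srcV[OF a]
    by (simp_all add: Phi_def fun_eq_iff) (metis)+
  have e1: "mul ?t (arr \<alpha>) = arr \<alpha>"
    using mul_end'[of "(src \<alpha>, [\<alpha>])"] by (simp add: arr_def path_end_def)
  have e2: "mul (arr \<alpha>) ?s = arr \<alpha>"
    using mul_start'[of "(src \<alpha>, [\<alpha>])"] by (simp add: arr_def)
  have h1: "D (arr \<alpha>) = lact ?t (D (arr \<alpha>))"
    using Der_mul[OF D vtx_A[OF tgtV[OF a]] arr_A[OF a]] e1 Dt by (simp add: ract_zero arr_A a)
  have h2: "D (arr \<alpha>) = ract (D (arr \<alpha>)) ?s"
    using Der_mul[OF D arr_A[OF a] vtx_A[OF srcV[OF a]]] e2 Ds by (simp add: lact_zero arr_A a)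
  have "D (arr \<alpha>) = lact ?t (ract (D (arr \<alpha>)) ?s)"
    unfolding h2[symmetric] by (rule h1)
  then show "Lam D \<alpha> \<in> Cn \<alpha>" using a by (auto simp: Lam_def Cn_def corner_def)
next
  fix \<alpha> assume "\<alpha> \<notin> Ar" then show "Lam D \<alpha> = 0" by (simp add: Lam_def)
qed

end



context qsetup begin

fun dfun :: "('a \<Rightarrow> 'x) \<Rightarrow> 'v \<Rightarrow> 'a list \<Rightarrow> 'x" where
  "dfun w v [] = 0"
| "dfun w v (\<alpha> # as) = ract (dfun w (tgt \<alpha>) as) (bp (v, [\<alpha>])) + lact (bp (tgt \<alpha>, as)) (w \<alpha>)"

definition dp :: "('a \<Rightarrow> 'x) \<Rightarrow> 'v \<times> 'a list \<Rightarrow> 'x" where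
  "dp w p = dfun w (fst p) (snd p)"

definition DD :: "('a \<Rightarrow> 'x) \<Rightarrow> ('v \<times> 'a list \<Rightarrow> 'k) \<Rightarrow> 'x" where
  "DD w f = (if f \<in> A then (\<Sum>p\<in>supp f. sc (f p) (dp w p)) else 0)"

lemma valid_end: "valid p \<Longrightarrow> path_end tgt p \<in> V"
proof -
  assume vp: "valid p"
  show ?thesis
  proof (cases "snd p = []")
    case True then show ?thesis using vp by (simp add: path_end_def valid_path_def)
  next
    case False
    then have "last (snd p) \<in> Ar" using vp by (auto simp: valid_path_def)
    then show ?thesis using False by (simp add: path_end_def tgtV)
  qed
qed

lemma mul_end0': "path_end tgt p \<noteq> u \<Longrightarrow> mul (vtx u) (bp p :: 'v \<times> 'a list \<Rightarrow> 'k) = 0"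
  by (rule mul_end0)

lemma mul_start0': "fst p \<noteq> u \<Longrightarrow> mul (bp p) (vtx u :: 'v \<times> 'a list \<Rightarrow> 'k) = 0"
  by (rule mul_start0)

lemma mul_comp': "composable tgt p q \<Longrightarrow> mul (bp p) (bp q :: 'v \<times> 'a list \<Rightarrow> 'k) = bp (path_comp p q)"
  by (rule mul_comp)

lemma valid_ConsD: "valid (v, \<alpha> # as) \<Longrightarrow> \<alpha> \<in> Ar \<and> src \<alpha> = v \<and> valid (tgt \<alpha>, as)"
  by (auto simp: valid_path_def tgtV)

context
  fixes w assumes w: "w \<in> Wsp Ar Cn"
begin

lemma w_corner: "\<alpha> \<in> Ar \<Longrightarrow> \<exists>m. w \<alpha> = lact (vtx (tgt \<alpha>)) (ract m (vtx (src \<alpha>)))"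
  using w by (auto simp: Wsp_def Cn_def corner_def)

lemma wL: "\<alpha> \<in> Ar \<Longrightarrow> lact (vtx (tgt \<alpha>)) (w \<alpha>) = w \<alpha>"
proof -
  assume a: "\<alpha> \<in> Ar"
  then obtain m where m: "w \<alpha> = lact (vtx (tgt \<alpha>)) (ract m (vtx (src \<alpha>)))" using w_corner by blast
  have "lact (vtx (tgt \<alpha>)) (w \<alpha>) = lact (mul (vtx (tgt \<alpha>)) (vtx (tgt \<alpha>))) (ract m (vtx (src \<alpha>)))"
    unfolding m by (simp add: lact_mul vtx_A tgtV a)
  also have "\<dots> = w \<alpha>" by (simp add: m mul_vv')
  finally show ?thesis .
qed

lemma wR: "\<alpha> \<in> Ar \<Longrightarrow> ract (w \<alpha>) (vtx (src \<alpha>)) = w \<alpha>"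
proof -
  assume a: "\<alpha> \<in> Ar"
  then obtain m where m: "w \<alpha> = lact (vtx (tgt \<alpha>)) (ract m (vtx (src \<alpha>)))" using w_corner by blast
  have "ract (w \<alpha>) (vtx (src \<alpha>)) = lact (vtx (tgt \<alpha>)) (ract m (mul (vtx (src \<alpha>)) (vtx (src \<alpha>))))"
    unfolding m by (simp add: lr_comm ract_mul vtx_A tgtV srcV a)
  also have "\<dots> = w \<alpha>" by (simp add: m mul_vv')
  finally show ?thesis .
qed

lemma d_corner:
  "valid (v, as) \<Longrightarrow> lact (vtx (path_end tgt (v, as))) (dfun w v as) = dfun w v as
     \<and> ract (dfun w v as) (vtx v) = dfun w v as"
proof (induction as arbitrary: v)
  case Nil
  then have "v \<in> V" by (simp add: valid_path_def)
  then show ?case by (simp add: path_end_def lact_zero ract_zero vtx_A)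
next
  case (Cons \<alpha> as)
  from valid_ConsD[OF Cons.prems] have a: "\<alpha> \<in> Ar" "src \<alpha> = v" and vr: "valid (tgt \<alpha>, as)" by auto
  let ?E = "path_end tgt (tgt \<alpha>, as)"
  let ?d = "dfun w (tgt \<alpha>) as"
  let ?arr = "bp (v, [\<alpha>]) :: 'v \<times> 'a list \<Rightarrow> 'k" and ?B = "bp (tgt \<alpha>, as) :: 'v \<times> 'a list \<Rightarrow> 'k"
  have EV: "?E \<in> V" using valid_end[OF vr] by simp
  have vV: "v \<in> V" using srcV[OF a(1)] a(2) by simp
  have arrA: "?arr \<in> A" using valid_arr[OF a(1)] a(2) by (simp add: bp_A)
  have BA: "?B \<in> A" using bp_A[OF vr] .
  have IH: "lact (vtx ?E) ?d = ?d" "ract ?d (vtx (tgt \<alpha>)) = ?d" using Cons.IH[OF vr] by auto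
  have pe: "path_end tgt (v, \<alpha> # as) = ?E" by (simp add: path_end_Cons)
  have L1: "lact (vtx ?E) (ract ?d ?arr) = ract ?d ?arr"
    using lr_comm[OF vtx_A[OF EV] arrA, of ?d] IH(1) by simp
  have L2: "lact (vtx ?E) (lact ?B (w \<alpha>)) = lact ?B (w \<alpha>)"
    using lact_mul[OF vtx_A[OF EV] BA, of "w \<alpha>"] mul_end'[of "(tgt \<alpha>, as)"] by simp
  have R1: "ract (ract ?d ?arr) (vtx v) = ract ?d ?arr"
    using ract_mul[OF arrA vtx_A[OF vV], of ?d] mul_start'[of "(v, [\<alpha>])"] by simp
  have R2: "ract (lact ?B (w \<alpha>)) (vtx v) = lact ?B (w \<alpha>)"
    using lr_comm[OF BA vtx_A[OF vV], of "w \<alpha>"] wR[OF a(1)] a(2) by simp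
  show ?case
    using L1 L2 R1 R2 by (simp add: pe lact_add ract_add vtx_A EV vV)
qed

lemma d_leibniz:
  assumes vp: "valid p"
  shows "valid (u, bs) \<Longrightarrow> composable tgt p (u, bs) \<Longrightarrow>
     dfun w u (bs @ snd p) = ract (dp w p) (bp (u, bs)) + lact (bp p) (dfun w u bs)"
proof (induction bs arbitrary: u)
  case Nil
  then have "fst p = u" "u \<in> V" by (auto simp: composable_def path_end_def valid_path_def)
  then have "p = (u, snd p)" by (cases p) auto
  then show ?case using d_corner[of u "snd p"] vp \<open>fst p = u\<close>
    by (simp add: dp_def vtx_bp[symmetric] lact_zero bp_A)
next
  case (Cons \<alpha> bs)
  from valid_ConsD[OF Cons.prems(1)] have a: "\<alpha> \<in> Ar" "src \<alpha> = u" and vr: "valid (tgt \<alpha>, bs)" by auto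
  have cp: "composable tgt p (tgt \<alpha>, bs)" using Cons.prems(2) by (simp add: composable_def path_end_Cons)
  let ?d = "dfun w (tgt \<alpha>) bs"
  let ?arr = "bp (u, [\<alpha>]) :: 'v \<times> 'a list \<Rightarrow> 'k" and ?B = "bp (tgt \<alpha>, bs) :: 'v \<times> 'a list \<Rightarrow> 'k"
  let ?P = "bp p :: 'v \<times> 'a list \<Rightarrow> 'k"
  have arrA: "?arr \<in> A" using valid_arr[OF a(1)] a(2) by (simp add: bp_A)
  have BA: "?B \<in> A" using bp_A[OF vr] .
  have PA: "?P \<in> A" using bp_A[OF vp] .
  have IH: "dfun w (tgt \<alpha>) (bs @ snd p) = ract (dp w p) ?B + lact ?P ?d"
    using Cons.IH[OF vr cp] .
  have m1: "mul ?B ?arr = bp (u, \<alpha> # bs)" using mul_cons'[OF a(2)] .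
  have m2: "mul ?P ?B = bp (tgt \<alpha>, bs @ snd p)"
    using mul_comp'[OF cp] by (simp add: path_comp_def)
  have "dfun w u ((\<alpha> # bs) @ snd p) = ract (dfun w (tgt \<alpha>) (bs @ snd p)) ?arr + lact (bp (tgt \<alpha>, bs @ snd p)) (w \<alpha>)"
    by simp
  also have "\<dots> = ract (ract (dp w p) ?B) ?arr + ract (lact ?P ?d) ?arr + lact (mul ?P ?B) (w \<alpha>)"
    by (simp add: IH ract_add arrA m2)
  also have "\<dots> = ract (dp w p) (bp (u, \<alpha> # bs)) + lact ?P (ract ?d ?arr) + lact ?P (lact ?B (w \<alpha>))"
    by (simp add: ract_mul[OF BA arrA, symmetric] m1 lr_comm[OF PA arrA] lact_mul[OF PA BA])
  also have "\<dots> = ract (dp w p) (bp (u, \<alpha> # bs)) + lact ?P (dfun w u (\<alpha> # bs))"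
    by (simp add: lact_add[OF PA] add.assoc)
  finally show ?case .
qed

lemma d_comp:
  assumes "valid p" "valid q" "composable tgt p q"
  shows "dp w (path_comp p q) = ract (dp w p) (bp q) + lact (bp p) (dp w q)"
  using d_leibniz[OF assms(1), of "fst q" "snd q"] assms(2,3)
  by (simp add: dp_def path_comp_def)

lemma d_noncomp:
  assumes vp: "valid p" and vq: "valid q" and nc: "\<not> composable tgt p q"
  shows "ract (dp w p) (bp q) = 0" "lact (bp p) (dp w q) = 0"
proof -
  have c1: "lact (vtx (path_end tgt p)) (dp w p) = dp w p \<and> ract (dp w p) (vtx (fst p)) = dp w p"
    using d_corner[of "fst p" "snd p"] vp by (simp add: dp_def)
  have c2: "lact (vtx (path_end tgt q)) (dp w q) = dp w q \<and> ract (dp w q) (vtx (fst q)) = dp w q"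
    using d_corner[of "fst q" "snd q"] vq by (simp add: dp_def)
  have fpV: "fst p \<in> V" using vp by (simp add: valid_path_def)
  have eqV: "path_end tgt q \<in> V" using valid_end[OF vq] .
  have ne: "path_end tgt q \<noteq> fst p" using nc by (simp add: composable_def)
  have "ract (dp w p) (bp q) = ract (ract (dp w p) (vtx (fst p))) (bp q)" using c1 by simp
  also have "\<dots> = ract (dp w p) (mul (vtx (fst p)) (bp q))"
    by (simp add: ract_mul vtx_A fpV bp_A vq)
  also have "\<dots> = 0" using mul_end0'[OF ne] by (simp add: ract_fzero)
  finally show "ract (dp w p) (bp q) = 0" .
  have "lact (bp p) (dp w q) = lact (bp p) (lact (vtx (path_end tgt q)) (dp w q))" using c2 by simp
  also have "\<dots> = lact (mul (bp p) (vtx (path_end tgt q))) (dp w q)"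
    by (simp add: lact_mul vtx_A eqV bp_A vp)
  also have "\<dots> = 0" using mul_start0'[of p "path_end tgt q"] ne by (simp add: lact_fzero)
  finally show "lact (bp p) (dp w q) = 0" .
qed

end

end



context qsetup begin

lemma supp_mul:
  "supp (mul f g) \<subseteq> (\<lambda>(p, q). path_comp p q) ` {(p, q). p \<in> supp f \<and> q \<in> supp g \<and> composable tgt p q}"
proof
  fix r assume "r \<in> supp (mul f g)"
  then have ne: "mul f g r \<noteq> 0" by (simp add: supp_def)
  have "{(p, q). f p \<noteq> 0 \<and> g q \<noteq> 0 \<and> composable tgt p q \<and> path_comp p q = r} \<noteq> {}"
  proof
    assume "{(p, q). f p \<noteq> 0 \<and> g q \<noteq> 0 \<and> composable tgt p q \<and> path_comp p q = r} = {}"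
    then have "mul f g r = 0" unfolding pa_mult_def by (simp only: sum.empty)
    with ne show False by simp
  qed
  then show "r \<in> (\<lambda>(p, q). path_comp p q) ` {(p, q). p \<in> supp f \<and> q \<in> supp g \<and> composable tgt p q}"
    by (auto simp: supp_def)
qed

context
  fixes w assumes w: "w \<in> Wsp Ar Cn"
begin

lemma DD_sum:
  assumes f: "f \<in> A" and P: "finite P" "supp f \<subseteq> P"
  shows "DD w f = (\<Sum>p\<in>P. sc (f p) (dp w p))"
proof -
  have "(\<Sum>p\<in>P. sc (f p) (dp w p)) = (\<Sum>p\<in>supp f. sc (f p) (dp w p))"
    by (rule sum.mono_neutral_right[OF P(1) P(2)]) (auto simp: supp_def)
  then show ?thesis using f by (simp add: DD_def)
qed

lemma DD_leibniz:
  assumes f: "f \<in> A" and g: "g \<in> A"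
  shows "DD w (mul f g) = ract (DD w f) g + lact f (DD w g)"
proof -
  let ?Sf = "supp f" and ?Sg = "supp g"
  have fSf: "finite ?Sf" and vSf: "\<forall>p\<in>?Sf. valid p" using supp_A[OF f] by auto
  have fSg: "finite ?Sg" and vSg: "\<forall>p\<in>?Sg. valid p" using supp_A[OF g] by auto
  define Pc where "Pc = {(p, q). p \<in> ?Sf \<and> q \<in> ?Sg \<and> composable tgt p q}"
  define cmp where "cmp = (\<lambda>(p, q). path_comp p q :: 'v \<times> 'a list)"
  define h where "h = (\<lambda>(p, q). f p * g q)"
  define T where "T = (\<lambda>(p, q). ract (dp w p) (bp q) + lact (bp p) (dp w q))"
  have PcS: "Pc \<subseteq> ?Sf \<times> ?Sg" by (auto simp: Pc_def)
  have fPc: "finite Pc" using finite_subset[OF PcS] fSf fSg by simp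
  have fR: "finite (cmp ` Pc)" using fPc by simp
  have sR: "supp (mul f g) \<subseteq> cmp ` Pc" using supp_mul[of f g] by (simp add: Pc_def cmp_def)
  have mulr: "mul f g r = (\<Sum>x\<in>{x \<in> Pc. cmp x = r}. h x)" for r
  proof -
    have "{(p, q). f p \<noteq> 0 \<and> g q \<noteq> 0 \<and> composable tgt p q \<and> path_comp p q = r} = {x \<in> Pc. cmp x = r}"
      by (auto simp: Pc_def cmp_def supp_def)
    then show ?thesis by (simp add: pa_mult_def h_def)
  qed
  have "DD w (mul f g) = (\<Sum>r\<in>cmp ` Pc. sc (mul f g r) (dp w r))"
    by (rule DD_sum[OF mul_A[OF f g] fR sR])
  also have "\<dots> = (\<Sum>r\<in>cmp ` Pc. \<Sum>x\<in>{x \<in> Pc. cmp x = r}. sc (h x) (dp w (cmp x)))"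
    by (rule sum.cong[OF refl]) (simp add: mulr X.scale_sum_left)
  also have "\<dots> = (\<Sum>x\<in>Pc. sc (h x) (dp w (cmp x)))"
    by (rule sum.group[OF fPc fR subset_refl])
  also have "\<dots> = (\<Sum>x\<in>Pc. sc (h x) (T x))"
  proof (rule sum.cong[OF refl])
    fix x assume "x \<in> Pc"
    then obtain p q where x: "x = (p, q)" "p \<in> ?Sf" "q \<in> ?Sg" "composable tgt p q" by (auto simp: Pc_def)
    then show "sc (h x) (dp w (cmp x)) = sc (h x) (T x)"
      using d_comp[OF w, of p q] vSf vSg by (simp add: cmp_def T_def)
  qed
  also have "\<dots> = (\<Sum>x\<in>?Sf \<times> ?Sg. sc (h x) (T x))"
  proof (rule sum.mono_neutral_left[OF _ PcS])
    show "finite (?Sf \<times> ?Sg)" using fSf fSg by simp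
    show "\<forall>x\<in>?Sf \<times> ?Sg - Pc. sc (h x) (T x) = 0"
    proof
      fix x assume "x \<in> ?Sf \<times> ?Sg - Pc"
      then obtain p q where x: "x = (p, q)" "p \<in> ?Sf" "q \<in> ?Sg" "\<not> composable tgt p q"
        by (auto simp: Pc_def)
      then show "sc (h x) (T x) = 0"
        using d_noncomp[OF w, of p q] vSf vSg by (simp add: T_def)
    qed
  qed
  also have "\<dots> = (\<Sum>p\<in>?Sf. \<Sum>q\<in>?Sg. sc (f p * g q) (ract (dp w p) (bp q)))
                + (\<Sum>p\<in>?Sf. \<Sum>q\<in>?Sg. sc (f p * g q) (lact (bp p) (dp w q)))"
    (is "_ = ?r")
  proof -
    have "(\<Sum>x\<in>?Sf \<times> ?Sg. sc (h x) (T x))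
       = (\<Sum>p\<in>?Sf. \<Sum>q\<in>?Sg. sc (f p * g q) (ract (dp w p) (bp q) + lact (bp p) (dp w q)))"
      unfolding sum.cartesian_product h_def T_def by (rule sum.cong) auto
    also have "\<dots> = ?r" by (simp add: X.scale_right_distrib sum.distrib)
    finally show ?thesis .
  qed
  also have "(\<Sum>p\<in>?Sf. \<Sum>q\<in>?Sg. sc (f p * g q) (ract (dp w p) (bp q))) = ract (DD w f) g"
  proof -
    have "ract (DD w f) g = ract (\<Sum>p\<in>?Sf. sc (f p) (dp w p)) g" using f by (simp add: DD_def)
    also have "\<dots> = (\<Sum>p\<in>?Sf. sc (f p) (ract (dp w p) g))" using g by (simp add: ract_sum ract_sc)
    also have "\<dots> = (\<Sum>p\<in>?Sf. sc (f p) (\<Sum>q\<in>?Sg. sc (g q) (ract (dp w p) (bp q))))"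
      using ract_expand[OF g fSg subset_refl vSg] by simp
    also have "\<dots> = (\<Sum>p\<in>?Sf. \<Sum>q\<in>?Sg. sc (f p * g q) (ract (dp w p) (bp q)))"
      by (simp add: X.scale_sum_right)
    finally show ?thesis by simp
  qed
  also have "(\<Sum>p\<in>?Sf. \<Sum>q\<in>?Sg. sc (f p * g q) (lact (bp p) (dp w q))) = lact f (DD w g)"
  proof -
    have "lact f (DD w g) = lact f (\<Sum>q\<in>?Sg. sc (g q) (dp w q))" using g by (simp add: DD_def)
    also have "\<dots> = (\<Sum>q\<in>?Sg. sc (g q) (lact f (dp w q)))" using f by (simp add: lact_sum lact_sc)
    also have "\<dots> = (\<Sum>q\<in>?Sg. sc (g q) (\<Sum>p\<in>?Sf. sc (f p) (lact (bp p) (dp w q))))"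
      using lact_expand[OF f fSf subset_refl vSf] by simp
    also have "\<dots> = (\<Sum>q\<in>?Sg. \<Sum>p\<in>?Sf. sc (f p * g q) (lact (bp p) (dp w q)))"
      by (simp add: X.scale_sum_right mult.commute)
    also have "\<dots> = (\<Sum>p\<in>?Sf. \<Sum>q\<in>?Sg. sc (f p * g q) (lact (bp p) (dp w q)))"
      by (rule sum.swap)
    finally show ?thesis by simp
  qed
  finally show ?thesis .
qed

lemma DD_Der: "DD w \<in> Der"
  unfolding Der_iff
proof (intro conjI ballI allI impI)
  fix f :: "'v \<times> 'a list \<Rightarrow> 'k" assume "f \<notin> A" then show "DD w f = 0" by (simp add: DD_def)
next
  fix f g :: "'v \<times> 'a list \<Rightarrow> 'k" assume f: "f \<in> A" and g: "g \<in> A"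
  let ?P = "supp f \<union> supp g"
  have fP: "finite ?P" using supp_A[OF f] supp_A[OF g] by auto
  have s: "supp (f + g) \<subseteq> ?P" by (auto simp: supp_def)
  show "DD w (f + g) = DD w f + DD w g"
    using DD_sum[OF add_A[OF f g] fP s] DD_sum[OF f fP] DD_sum[OF g fP]
    by (simp add: X.scale_left_distrib sum.distrib)
  show "DD w (mul f g) = ract (DD w f) g + lact f (DD w g)" by (rule DD_leibniz[OF f g])
next
  fix f :: "'v \<times> 'a list \<Rightarrow> 'k" and c assume f: "f \<in> A"
  have fP: "finite (supp f)" using supp_A[OF f] by auto
  have s: "supp (pa_scale c f) \<subseteq> supp f" by (auto simp: supp_def pa_scale_def)
  show "DD w (pa_scale c f) = sc c (DD w f)"
    using DD_sum[OF scale_A[OF f] fP s] DD_sum[OF f fP subset_refl]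
    by (simp add: X.scale_sum_right pa_scale_def)
qed

lemma DD_Phi: "Phi (DD w) = 0"
proof (rule ext)
  fix v
  show "Phi (DD w) v = 0 v"
  proof (cases "v \<in> V")
    case True
    have s: "supp (vtx v :: 'v \<times> 'a list \<Rightarrow> 'k) \<subseteq> {(v, [])}" by (auto simp: supp_def vtx_def)
    show ?thesis using DD_sum[OF vtx_A[OF True] _ s] True by (simp add: Phi_def dp_def vtx_def)
  qed (simp add: Phi_def)
qed

lemma DD_Lam: "Lam (DD w) = w"
proof (rule ext)
  fix \<alpha>
  show "Lam (DD w) \<alpha> = w \<alpha>"
  proof (cases "\<alpha> \<in> Ar")
    case True
    have s: "supp (arr \<alpha>) \<subseteq> {(src \<alpha>, [\<alpha>])}" by (auto simp: supp_def arr_def bp_def)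
    have "DD w (arr \<alpha>) = dp w (src \<alpha>, [\<alpha>])"
      using DD_sum[OF arr_A[OF True] _ s] by (simp add: arr_def bp_def)
    also have "\<dots> = lact (vtx (tgt \<alpha>)) (w \<alpha>)"
      by (simp add: dp_def vtx_bp ract_zero bp_A valid_arr True)
    also have "\<dots> = w \<alpha>" by (rule wL[OF w True])
    finally show ?thesis using True by (simp add: Lam_def)
  next
    case False
    then show ?thesis using w by (simp add: Lam_def Wsp_def)
  qed
qed

end

end



context qsetup begin

lemma Cn_subspace: "\<alpha> \<in> Ar \<Longrightarrow> X.subspace (Cn \<alpha>)"
proof -
  assume a: "\<alpha> \<in> Ar"
  interpret pp: vector_space_pair sc sc by unfold_locales
  let ?f = "\<lambda>m. lact (vtx (tgt \<alpha>)) (ract m (vtx (src \<alpha>)))"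
  have lin: "Vector_Spaces.linear sc sc ?f"
    by (rule Vector_Spaces.linear_iff[THEN iffD2])
       (simp add: vs lact_add ract_add lact_sc ract_sc vtx_A tgtV srcV a)
  have "Cn \<alpha> = ?f ` UNIV" by (auto simp: Cn_def corner_def)
  then show ?thesis using pp.linear_subspace_image[OF lin X.subspace_UNIV] by simp
qed

lemma sum_rearrange:
  "(\<Sum>\<alpha>\<in>Ar. int (X.dim (Cn \<alpha>))) =
   (\<Sum>x\<in>V. \<Sum>y\<in>V. int (card {\<alpha> \<in> Ar. src \<alpha> = x \<and> tgt \<alpha> = y}) * int (X.dim (corner vtx lact ract y x)))"
proof -
  let ?g = "\<lambda>\<alpha>. (src \<alpha>, tgt \<alpha>)"
  have im: "?g ` Ar \<subseteq> V \<times> V" using srcV tgtV by auto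
  have fVV: "finite (V \<times> V)" using finV by simp
  have "(\<Sum>\<alpha>\<in>Ar. int (X.dim (Cn \<alpha>))) =
      (\<Sum>xy\<in>V \<times> V. \<Sum>\<alpha>\<in>{\<alpha> \<in> Ar. ?g \<alpha> = xy}. int (X.dim (Cn \<alpha>)))"
    by (rule sum.group[OF finAr fVV im, symmetric])
  also have "\<dots> = (\<Sum>xy\<in>V \<times> V. int (card {\<alpha> \<in> Ar. src \<alpha> = fst xy \<and> tgt \<alpha> = snd xy})
                      * int (X.dim (corner vtx lact ract (snd xy) (fst xy))))"
  proof (rule sum.cong[OF refl])
    fix xy :: "'v \<times> 'v"
    have "(\<Sum>\<alpha>\<in>{\<alpha> \<in> Ar. ?g \<alpha> = xy}. int (X.dim (Cn \<alpha>)))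
        = (\<Sum>\<alpha>\<in>{\<alpha> \<in> Ar. src \<alpha> = fst xy \<and> tgt \<alpha> = snd xy}. int (X.dim (corner vtx lact ract (snd xy) (fst xy))))"
      by (rule sum.cong) (auto simp: Cn_def)
    then show "(\<Sum>\<alpha>\<in>{\<alpha> \<in> Ar. ?g \<alpha> = xy}. int (X.dim (Cn \<alpha>))) =
        int (card {\<alpha> \<in> Ar. src \<alpha> = fst xy \<and> tgt \<alpha> = snd xy}) * int (X.dim (corner vtx lact ract (snd xy) (fst xy)))"
      by simp
  qed
  also have "\<dots> = (\<Sum>x\<in>V. \<Sum>y\<in>V. int (card {\<alpha> \<in> Ar. src \<alpha> = x \<and> tgt \<alpha> = y}) * int (X.dim (corner vtx lact ract y x)))"
    by (simp add: sum.cartesian_product case_prod_beta)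
  finally show ?thesis .
qed

lemma main_formula:
  "H1_dim V Ar src tgt sc lact ract =
     int (X.dim (invariants lact ract A))
   - int (X.dim (invariants lact ract (vertex_subalg V Ar src tgt)))
   + (\<Sum>x\<in>V. \<Sum>y\<in>V. int (card {\<alpha> \<in> Ar. src \<alpha> = x \<and> tgt \<alpha> = y})
                       * int (X.dim (corner vtx lact ract y x)))"
proof -
  interpret F1: vector_space "fun_scale sc :: 'k \<Rightarrow> (('v \<times> 'a list \<Rightarrow> 'k) \<Rightarrow> 'x) \<Rightarrow> _" by (rule FS)
  interpret F2: vector_space "fun_scale sc :: 'k \<Rightarrow> ('v \<Rightarrow> 'x) \<Rightarrow> _" by (rule FS)
  interpret F3: vector_space "fun_scale sc :: 'k \<Rightarrow> ('a \<Rightarrow> 'x) \<Rightarrow> _" by (rule FS)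
  interpret P1: vector_space_pair sc "fun_scale sc :: 'k \<Rightarrow> (('v \<times> 'a list \<Rightarrow> 'k) \<Rightarrow> 'x) \<Rightarrow> _" by unfold_locales
  interpret P2: vector_space_pair sc "fun_scale sc :: 'k \<Rightarrow> ('v \<Rightarrow> 'x) \<Rightarrow> _" by unfold_locales
  interpret P3: vector_space_pair "fun_scale sc :: 'k \<Rightarrow> (('v \<times> 'a list \<Rightarrow> 'k) \<Rightarrow> 'x) \<Rightarrow> _"
     "fun_scale sc :: 'k \<Rightarrow> ('v \<Rightarrow> 'x) \<Rightarrow> _" by unfold_locales
  interpret P4: vector_space_pair "fun_scale sc :: 'k \<Rightarrow> (('v \<times> 'a list \<Rightarrow> 'k) \<Rightarrow> 'x) \<Rightarrow> _"
     "fun_scale sc :: 'k \<Rightarrow> ('a \<Rightarrow> 'x) \<Rightarrow> _" by unfold_locales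
  obtain B where B: "finite B" "X.span B = UNIV" using fd by (auto simp: fin_dim_def)
  have allB: "S \<subseteq> X.span B" for S using B by simp
  define PD where "PD = Phi \<circ> delta"
  have linPD: "Vector_Spaces.linear sc (fun_scale sc) PD"
    unfolding PD_def by (rule Vector_Spaces.linear_compose[OF delta_linear Phi_linear])
  have R1: "X.dim (UNIV :: 'x set) = F1.dim (delta ` UNIV) + X.dim (invariants lact ract A)"
  proof -
    have "X.dim (UNIV :: 'x set) = F1.dim (delta ` UNIV) + X.dim (UNIV \<inter> {m. delta m = 0})
          \<and> (\<exists>F. finite F \<and> UNIV \<subseteq> X.span F)"
      by (rule P1.rank_nullity[OF delta_linear X.subspace_UNIV B(1) allB, of "delta ` B"])
         (use B P1.linear_spans_image[OF delta_linear, of UNIV B] in auto)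
    then show ?thesis using ker_delta by simp
  qed
  have R2: "X.dim (UNIV :: 'x set) = F2.dim (PD ` UNIV) + X.dim (invariants lact ract (vertex_subalg V Ar src tgt))"
  proof -
    have "X.dim (UNIV :: 'x set) = F2.dim (PD ` UNIV) + X.dim (UNIV \<inter> {m. PD m = 0})
          \<and> (\<exists>F. finite F \<and> UNIV \<subseteq> X.span F)"
      by (rule P2.rank_nullity[OF linPD X.subspace_UNIV B(1) allB, of "PD ` B"])
         (use B P2.linear_spans_image[OF linPD, of UNIV B] in auto)
    then show ?thesis using ker_Phi_delta by (simp add: PD_def)
  qed
  define Der0 where "Der0 = Der \<inter> {D. Phi D = 0}"
  have Der0_sub: "F1.subspace Der0"
    unfolding Der0_def by (rule F1.subspace_inter[OF Der_subspace P3.linear_subspace_kernel[OF Phi_linear]])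
  have Lam_img: "Lam ` Der0 = Wsp Ar Cn"
  proof
    show "Lam ` Der0 \<subseteq> Wsp Ar Cn" using Lam_Wsp by (auto simp: Der0_def)
    show "Wsp Ar Cn \<subseteq> Lam ` Der0"
    proof
      fix w assume w: "w \<in> Wsp Ar Cn"
      have "DD w \<in> Der0" using DD_Der[OF w] DD_Phi[OF w] by (simp add: Der0_def)
      then show "w \<in> Lam ` Der0" using DD_Lam[OF w] by (metis image_eqI)
    qed
  qed
  have Lam_ker: "Der0 \<inter> {D. Lam D = 0} = {0}"
  proof
    show "Der0 \<inter> {D. Lam D = 0} \<subseteq> {0}" using Der_inj by (auto simp: Der0_def)
    show "{0} \<subseteq> Der0 \<inter> {D. Lam D = 0}"
      using F1.subspace_0[OF Der0_sub] P4.linear_0[OF Lam_linear] by auto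
  qed
  have W: "F3.dim (Wsp Ar Cn) = (\<Sum>\<alpha>\<in>Ar. X.dim (Cn \<alpha>)) \<and> (\<exists>F. finite F \<and> Wsp Ar Cn \<subseteq> F3.span F)"
    by (rule Wsp_dim[OF vs finAr]) (use Cn_subspace B in auto)
  then obtain FW where FW: "finite FW" "Wsp Ar Cn \<subseteq> F3.span FW" by blast
  have R4: "F1.dim Der0 = F3.dim (Wsp Ar Cn) + F1.dim {0} \<and> (\<exists>F. finite F \<and> Der0 \<subseteq> F1.span F)"
    using P4.rank_nullity[OF Lam_linear Der0_sub, of "{}" FW] FW Lam_img Lam_ker by simp
  then obtain F0 where F0: "finite F0" "Der0 \<subseteq> F1.span F0" by blast
  have Phi_img: "Phi ` Der = PD ` UNIV"
  proof
    show "Phi ` Der \<subseteq> PD ` UNIV" using Phi_Der_delta by (auto simp: PD_def)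
    show "PD ` UNIV \<subseteq> Phi ` Der" using delta_Der by (auto simp: PD_def)
  qed
  have R3: "F1.dim Der = F2.dim (PD ` UNIV) + F1.dim Der0"
  proof -
    have "F1.dim Der = F2.dim (Phi ` Der) + F1.dim (Der \<inter> {D. Phi D = 0})
          \<and> (\<exists>F. finite F \<and> Der \<subseteq> F1.span F)"
      by (rule P3.rank_nullity[OF Phi_linear Der_subspace F0(1), of "PD ` B"])
         (use F0 Der0_def Phi_img B P2.linear_spans_image[OF linPD, of UNIV B] in auto)
    then show ?thesis using Phi_img by (simp add: Der0_def)
  qed
  have H: "H1_dim V Ar src tgt sc lact ract = int (F1.dim Der) - int (F1.dim (delta ` UNIV))"
    by (simp add: H1_dim_def Der_def Inn_eq)
  have "F1.dim {0} = 0" by (rule F1.dim_zero_set)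
  then have "int (F1.dim Der) = int (F2.dim (PD ` UNIV)) + (\<Sum>\<alpha>\<in>Ar. int (X.dim (Cn \<alpha>)))"
    using R3 R4 W by simp
  then show ?thesis using H R1 R2 sum_rearrange by simp
qed

end


theorem corollary4p6:
  fixes V :: "'v set" and Ar :: "'a set" and src tgt :: "'a \<Rightarrow> 'v"
    and sc :: "'k::field \<Rightarrow> 'x::ab_group_add \<Rightarrow> 'x"
    and lact :: "('v \<times> 'a list \<Rightarrow> 'k) \<Rightarrow> 'x \<Rightarrow> 'x"
    and ract :: "'x \<Rightarrow> ('v \<times> 'a list \<Rightarrow> 'k) \<Rightarrow> 'x"
  assumes "quiver V Ar src tgt"
    and "pa_bimodule V Ar src tgt sc lact ract"
    and "fin_dim sc"
  shows "H1_dim V Ar src tgt sc lact ract =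
           int (vector_space.dim sc (invariants lact ract (pathalg V Ar src tgt)))
         - int (vector_space.dim sc (invariants lact ract (vertex_subalg V Ar src tgt)))
         + (\<Sum>x\<in>V. \<Sum>y\<in>V. int (card {\<alpha> \<in> Ar. src \<alpha> = x \<and> tgt \<alpha> = y})
                             * int (vector_space.dim sc (corner vtx lact ract y x)))"
proof -
  interpret qsetup V Ar src tgt sc lact ract using assms by unfold_locales
  show ?thesis by (rule main_formula)
qed

end
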